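(* Let $G$ be a connected partial cube with $\Theta$-classes $E_1,\ldots,E_d$. For each $k$ let $U_k$ and $U_k'$ be the two connected components of $G-E_k$, and for $k,l\in\{1,\ldots,d\}$ set $m_{kl}^{11}=|E(U_k)\cap E(U_l)|$, $m_{kl}^{10}=|E(U_k)\cap E(U_l')|$, $m_{kl}^{01}=|E(U_k')\cap E(U_l)|$, $m_{kl}^{00}=|E(U_k')\cap E(U_l')|$. Then $$WW_e(G)=2W_e(G)+\sum_{k=1}^{d-1}\sum_{l=k+1}^{d}\big(m_{kl}^{11}m_{kl}^{00}+m_{kl}^{10}m_{kl}^{01}\big)-\binom{|E(G)|}{2}.$$
   Context: A partial cube is a graph isomorphic to an isometric subgraph of a hypercube. The Djoković–Winkler relation $\Theta$ on $E(G)$: $xy\,\Theta\,uv$ iff $d(x,u)+d(y,v)\neq d(x,v)+d(y,u)$, with $d$ the shortest-path distance. In a partial cube $\Theta$ is an equivalence relation whose classes are the $\Theta$-classes, and removing a $\Theta$-class leaves exactly two connected components. The distance $d(e,f)$ between edges is the distance between $e$ and $f$ as vertices of the line graph $L(G)$. The edge-Wiener index is $W_e(G)=\sum_{\{e,f\}\subseteq E(G)}d(e,f)$ and the edge-hyper-Wiener index is $WW_e(G)=\frac12\sum_{\{e,f\}\subseteq E(G)}d(e,f)+\frac12\sum_{\{e,f\}\subseteq E(G)}d(e,f)^2$, sums over unordered pairs of distinct edges. *)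

theory Defs
  imports Complex_Main
begin

definition simple_graph :: "'a set \<Rightarrow> 'a set set \<Rightarrow> bool" where
  "simple_graph V E \<longleftrightarrow> finite V \<and> (\<forall>e\<in>E. \<exists>x y. x \<in> V \<and> y \<in> V \<and> x \<noteq> y \<and> e = {x, y})"

definition adj :: "'a set set \<Rightarrow> 'a \<Rightarrow> 'a \<Rightarrow> bool" where
  "adj E x y \<longleftrightarrow> {x, y} \<in> E \<and> x \<noteq> y"

definition gdist :: "('b \<Rightarrow> 'b \<Rightarrow> bool) \<Rightarrow> 'b \<Rightarrow> 'b \<Rightarrow> nat" where
  "gdist R x y = (LEAST n. (R ^^ n) x y)"

definition vdist :: "'a set set \<Rightarrow> 'a \<Rightarrow> 'a \<Rightarrow> nat" where
  "vdist E = gdist (adj E)"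

definition connected_graph :: "'a set \<Rightarrow> 'a set set \<Rightarrow> bool" where
  "connected_graph V E \<longleftrightarrow> (\<forall>x\<in>V. \<forall>y\<in>V. (adj E)\<^sup>*\<^sup>* x y)"

definition components :: "'a set \<Rightarrow> 'a set set \<Rightarrow> 'a set set" where
  "components V E = {{y \<in> V. (adj E)\<^sup>*\<^sup>* x y} | x. x \<in> V}"

(* partial cube: isometric embedding into a hypercube Q_n (vertices = 0/1-vectors of
   length n, distance = Hamming distance) *)
definition partial_cube :: "'a set \<Rightarrow> 'a set set \<Rightarrow> bool" where
  "partial_cube V E \<longleftrightarrow> simple_graph V E \<and>
     (\<exists>(n::nat) (f :: 'a \<Rightarrow> nat \<Rightarrow> bool). inj_on f V \<and>
        (\<forall>x\<in>V. \<forall>y\<in>V. vdist E x y = card {i. i < n \<and> f x i \<noteq> f y i}))"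

definition Theta :: "'a set set \<Rightarrow> 'a set \<Rightarrow> 'a set \<Rightarrow> bool" where
  "Theta E e f \<longleftrightarrow> (\<exists>x y u v. e = {x, y} \<and> f = {u, v} \<and>
      vdist E x u + vdist E y v \<noteq> vdist E x v + vdist E y u)"

definition Theta_rel :: "'a set set \<Rightarrow> ('a set \<times> 'a set) set" where
  "Theta_rel E = {(e, f). e \<in> E \<and> f \<in> E \<and> Theta E e f}"

definition Theta_classes :: "'a set set \<Rightarrow> 'a set set set" where
  "Theta_classes E = E // Theta_rel E"

definition ladj :: "'a set set \<Rightarrow> 'a set \<Rightarrow> 'a set \<Rightarrow> bool" where
  "ladj E e f \<longleftrightarrow> e \<in> E \<and> f \<in> E \<and> e \<noteq> f \<and> e \<inter> f \<noteq> {}"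

definition edist :: "'a set set \<Rightarrow> 'a set \<Rightarrow> 'a set \<Rightarrow> nat" where
  "edist E = gdist (ladj E)"

(* sums over unordered pairs of distinct edges, written as half the sum over ordered pairs *)
definition edge_wiener :: "'a set set \<Rightarrow> real" where
  "edge_wiener E = (\<Sum>(e, f) \<in> {(e, f). e \<in> E \<and> f \<in> E \<and> e \<noteq> f}. real (edist E e f)) / 2"

definition edge_hyper_wiener :: "'a set set \<Rightarrow> real" where
  "edge_hyper_wiener E =
     (1/2) * ((\<Sum>(e, f) \<in> {(e, f). e \<in> E \<and> f \<in> E \<and> e \<noteq> f}. real (edist E e f)) / 2)
   + (1/2) * ((\<Sum>(e, f) \<in> {(e, f). e \<in> E \<and> f \<in> E \<and> e \<noteq> f}. real (edist E e f) ^ 2) / 2)"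

definition induced_edges :: "'a set set \<Rightarrow> 'a set \<Rightarrow> 'a set set" where
  "induced_edges E U = {e \<in> E. e \<subseteq> U}"

end

theory Submission
  imports Defs
begin


lemma card_filter_sum: "finite K \<Longrightarrow> real (card {k\<in>K. P k}) = (\<Sum>k\<in>K. if P k then 1 else 0)"
  by (simp add: sum.If_cases Int_def)

lemma sym_split:
  fixes G :: "nat \<Rightarrow> nat \<Rightarrow> real"
  assumes sym: "\<And>k l. G k l = G l k"
  shows "(\<Sum>k\<in>{1..d}. \<Sum>l\<in>{1..d}-{k}. G k l) = 2 * (\<Sum>k = 1..d - 1. \<Sum>l = k + 1..d. G k l)"
proof -
  let ?K = "{1..d::nat}"
  have split: "(\<Sum>l\<in>?K-{k}. G k l) = (\<Sum>l\<in>{l\<in>?K. l < k}. G k l) + (\<Sum>l\<in>{l\<in>?K. k < l}. G k l)" for k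
  proof -
    have e: "?K - {k} = {l\<in>?K. l < k} \<union> {l\<in>?K. k < l}" by auto
    have "(\<Sum>l\<in>{l\<in>?K. l < k} \<union> {l\<in>?K. k < l}. G k l) = (\<Sum>l\<in>{l\<in>?K. l < k}. G k l) + (\<Sum>l\<in>{l\<in>?K. k < l}. G k l)"
      by (rule sum.union_disjoint) auto
    then show ?thesis unfolding e .
  qed
  have sw: "(\<Sum>k\<in>?K. \<Sum>l\<in>{l\<in>?K. l < k}. G k l) = (\<Sum>l\<in>?K. \<Sum>k\<in>{k\<in>?K. l < k}. G l k)"
  proof -
    have "(\<Sum>k\<in>?K. \<Sum>l\<in>{l\<in>?K. l < k}. G k l) = (\<Sum>l\<in>?K. \<Sum>k\<in>{k\<in>?K. l < k}. G k l)"
      by (rule sum.swap_restrict) auto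
    also have "\<dots> = (\<Sum>l\<in>?K. \<Sum>k\<in>{k\<in>?K. l < k}. G l k)" using sym by simp
    finally show ?thesis by simp
  qed
  have hi: "(\<Sum>k\<in>?K. \<Sum>l\<in>{l\<in>?K. k < l}. G k l) = (\<Sum>k = 1..d - 1. \<Sum>l = k + 1..d. G k l)"
  proof -
    have "(\<Sum>k\<in>?K. \<Sum>l\<in>{l\<in>?K. k < l}. G k l) = (\<Sum>k\<in>?K. \<Sum>l = k + 1..d. G k l)"
    proof (rule sum.cong)
      fix k assume "k \<in> ?K"
      then have "{l\<in>?K. k < l} = {k+1..d}" by auto
      then show "(\<Sum>l\<in>{l\<in>?K. k < l}. G k l) = (\<Sum>l = k + 1..d. G k l)" by simp
    qed simp
    also have "\<dots> = (\<Sum>k = 1..d - 1. \<Sum>l = k + 1..d. G k l)"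
    proof (rule sum.mono_neutral_right)
      show "{1..d - 1} \<subseteq> ?K" by auto
      show "\<forall>k\<in>?K - {1..d - 1}. (\<Sum>l = k + 1..d. G k l) = 0"
      proof
        fix k assume "k \<in> ?K - {1..d - 1}"
        then have "k = d" by auto
        then show "(\<Sum>l = k + 1..d. G k l) = 0" by simp
      qed
    qed simp
    finally show ?thesis .
  qed
  have "(\<Sum>k\<in>?K. \<Sum>l\<in>?K-{k}. G k l) = (\<Sum>k\<in>?K. \<Sum>l\<in>{l\<in>?K. l < k}. G k l) + (\<Sum>k\<in>?K. \<Sum>l\<in>{l\<in>?K. k < l}. G k l)"
    unfolding split by (rule sum.distrib)
  also have "\<dots> = 2 * (\<Sum>k = 1..d - 1. \<Sum>l = k + 1..d. G k l)" unfolding sw hi by simp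
  finally show ?thesis .
qed

lemma c2n: "2 * (m choose 2) = m * (m - 1)"
proof -
  have "even (m * (m - 1))" by (cases m) auto
  then show ?thesis by (simp add: choose_two)
qed

lemma c2: "finite E \<Longrightarrow> card {(e, f). e \<in> E \<and> f \<in> E \<and> e \<noteq> f} = card E * (card E - 1)"
proof -
  assume fE: "finite E"
  have e: "{(e, f). e \<in> E \<and> f \<in> E \<and> e \<noteq> f} = E \<times> E - (\<lambda>e. (e, e)) ` E" by auto
  have "card ((\<lambda>e. (e, e)) ` E) = card E" by (rule card_image) (auto intro: inj_onI)
  moreover have "card (E \<times> E - (\<lambda>e. (e, e)) ` E) = card (E \<times> E) - card ((\<lambda>e. (e, e)) ` E)"
    by (rule card_Diff_subset) (use fE in auto)
  ultimately show ?thesis unfolding e by (simp add: card_cartesian_product diff_mult_distrib2)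
qed

locale PC =
  fixes V :: "'a set" and E :: "'a set set" and n :: nat and F :: "'a \<Rightarrow> nat \<Rightarrow> bool"
    and d :: nat and Ec :: "nat \<Rightarrow> 'a set set" and U U' :: "nat \<Rightarrow> 'a set"
  assumes sg: "simple_graph V E"
    and emb: "\<forall>x\<in>V. \<forall>y\<in>V. vdist E x y = card {i. i < n \<and> F x i \<noteq> F y i}"
    and conn: "connected_graph V E"
    and classes: "bij_betw Ec {1..d} (Theta_classes E)"
    and comps: "\<And>k. k \<in> {1..d} \<Longrightarrow> U k \<noteq> U' k \<and> components V (E - Ec k) = {U k, U' k}"
begin

definition D where "D x y = {i. i < n \<and> F x i \<noteq> F y i}"
definition c where "c g = (THE i. i < n \<and> (\<exists>x\<in>g. \<exists>y\<in>g. F x i \<noteq> F y i))"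

lemma finV: "finite V" using sg by (simp add: simple_graph_def)

lemma edge_form: "g \<in> E \<Longrightarrow> \<exists>x y. x \<in> V \<and> y \<in> V \<and> x \<noteq> y \<and> g = {x, y}"
  using sg by (simp add: simple_graph_def)

lemma EsubV: "g \<in> E \<Longrightarrow> g \<subseteq> V" using edge_form by blast

lemma finE: "finite E"
proof -
  have "E \<subseteq> Pow V" using EsubV by blast
  then show ?thesis using finV finite_subset by blast
qed

lemma finD: "finite (D x y)" unfolding D_def by simp

lemma D_sym: "D x y = D y x" unfolding D_def by auto

lemma vdist_edge: assumes "{x,y} \<in> E" "x \<noteq> y" shows "vdist E x y = 1"
proof -
  have a: "adj E x y" using assms by (simp add: adj_def)
  show ?thesis unfolding vdist_def gdist_def
  proof (rule Least_equality)
    show "(adj E ^^ 1) x y" using a by (simp only: One_nat_def relpowp_Suc_0)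
  next
    fix m assume "(adj E ^^ m) x y"
    then show "1 \<le> m" using assms by (cases m) auto
  qed
qed

lemma D_edge: assumes "g \<in> E" "x \<in> g" "y \<in> g" "x \<noteq> y" shows "D x y = {c g}"
proof -
  obtain a b where ab: "a \<in> V" "b \<in> V" "a \<noteq> b" "g = {a, b}" using edge_form assms(1) by blast
  have g: "g = {x, y}" using ab assms by auto
  have xy: "x \<in> V" "y \<in> V" using ab assms by auto
  have "card (D x y) = 1" using vdist_edge[of x y] emb xy assms g by (simp add: D_def)
  then obtain i where i: "D x y = {i}" by (rule card_1_singletonE)
  have "c g = i" unfolding c_def
  proof (rule the_equality)
    show "i < n \<and> (\<exists>x\<in>g. \<exists>y\<in>g. F x i \<noteq> F y i)" using i g unfolding D_def by auto
  next
    fix j assume j: "j < n \<and> (\<exists>x\<in>g. \<exists>y\<in>g. F x j \<noteq> F y j)"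
    then have "j \<in> D x y" using g unfolding D_def by auto
    then show "j = i" using i by auto
  qed
  then show ?thesis using i by simp
qed

lemma c_props: assumes "g \<in> E" "x \<in> g" "y \<in> g" "x \<noteq> y"
  shows "c g < n" "F x (c g) \<noteq> F y (c g)" "\<And>i. i \<noteq> c g \<Longrightarrow> F x i = F y i \<or> \<not> i < n"
  using D_edge[OF assms] unfolding D_def by blast+

lemma same_off_c: assumes "g \<in> E" "x \<in> g" "y \<in> g" "i \<noteq> c g" "i < n" shows "F x i = F y i"
  using c_props[OF assms(1-3)] assms by (cases "x = y") auto

lemma card_D_sum: "int (card (D x y)) = (\<Sum>i<n. if F x i \<noteq> F y i then 1 else 0)"
proof -
  have "D x y = {i\<in>{..<n}. F x i \<noteq> F y i}" unfolding D_def by auto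
  then show ?thesis by (simp add: sum.If_cases Int_def)
qed


lemma vdist_D: "x \<in> V \<Longrightarrow> y \<in> V \<Longrightarrow> vdist E x y = card (D x y)"
  using emb by (simp add: D_def)

lemma theta_core:
  assumes g: "g \<in> E" "x \<in> g" "y \<in> g" "x \<noteq> y" and h: "h \<in> E" "u \<in> h" "v \<in> h" "u \<noteq> v"
  shows "(int (card (D x u)) + int (card (D y v)) = int (card (D x v)) + int (card (D y u)))
         \<longleftrightarrow> c g \<noteq> c h"
proof -
  define t where "t i = (if F x i \<noteq> F u i then 1 else 0) + (if F y i \<noteq> F v i then 1 else 0)
     - (if F x i \<noteq> F v i then 1 else 0) - (if F y i \<noteq> F u i then (1::int) else 0)" for i
  have eq: "int (card (D x u)) + int (card (D y v)) - int (card (D x v)) - int (card (D y u)) = (\<Sum>i<n. t i)"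
    unfolding card_D_sum t_def by (simp add: sum.distrib sum_subtractf)
  have z: "t i = 0" if "i < n" "i \<noteq> c g \<or> i \<noteq> c h" for i
  proof (cases "i \<noteq> c g")
    case True
    then have "F x i = F y i" using same_off_c[OF g(1-3)] that by blast
    then show ?thesis unfolding t_def by auto
  next
    case False
    then have "F u i = F v i" using same_off_c[OF h(1-3)] that by blast
    then show ?thesis unfolding t_def by auto
  qed
  show ?thesis
  proof (cases "c g = c h")
    case False
    then have "(\<Sum>i<n. t i) = 0" using z by (intro sum.neutral) auto
    then show ?thesis using eq False by simp
  next
    case True
    have a: "c g < n" using c_props[OF g] by simp
    have "(\<Sum>i<n. t i) = t (c g) + (\<Sum>i\<in>{..<n} - {c g}. t i)"
      using a by (simp add: sum.remove)
    also have "(\<Sum>i\<in>{..<n} - {c g}. t i) = 0" using z by (intro sum.neutral) auto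
    finally have s: "(\<Sum>i<n. t i) = t (c g)" by simp
    have "F x (c g) \<noteq> F y (c g)" "F u (c h) \<noteq> F v (c h)" using c_props[OF g] c_props[OF h] by auto
    then have "t (c g) \<noteq> 0" using True unfolding t_def by auto
    then show ?thesis using eq s True by simp
  qed
qed

lemma Theta_iff: assumes "g \<in> E" "h \<in> E" shows "Theta E g h \<longleftrightarrow> c g = c h"
proof
  assume "Theta E g h"
  then obtain x y u v where xyuv: "g = {x, y}" "h = {u, v}"
    and ne: "vdist E x u + vdist E y v \<noteq> vdist E x v + vdist E y u" unfolding Theta_def by blast
  have "x \<noteq> y" "u \<noteq> v" using edge_form assms xyuv by fastforce+
  moreover have V: "x \<in> V" "y \<in> V" "u \<in> V" "v \<in> V" using EsubV assms xyuv by auto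
  ultimately show "c g = c h" using theta_core[of g x y h u v] assms xyuv ne vdist_D[OF V(1) V(3)]
    vdist_D[OF V(2) V(4)] vdist_D[OF V(1) V(4)] vdist_D[OF V(2) V(3)] by auto
next
  assume cc: "c g = c h"
  obtain x y where xy: "x \<in> V" "y \<in> V" "x \<noteq> y" "g = {x, y}" using edge_form assms(1) by blast
  obtain u v where uv: "u \<in> V" "v \<in> V" "u \<noteq> v" "h = {u, v}" using edge_form assms(2) by blast
  have "vdist E x u + vdist E y v \<noteq> vdist E x v + vdist E y u"
    using theta_core[of g x y h u v] assms xy uv cc vdist_D by auto
  then show "Theta E g h" unfolding Theta_def using xy uv by blast
qed


definition idx where "idx k = c (SOME g. g \<in> Ec k)"

lemma Ec_eq: assumes "k \<in> {1..d}" shows "Ec k = {h \<in> E. c h = idx k}" "Ec k \<noteq> {}"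
proof -
  have "Ec ` {1..d} = Theta_classes E" using classes by (rule bij_betw_imp_surj_on)
  then have "Ec k \<in> E // Theta_rel E" using assms unfolding Theta_classes_def by (metis imageI)
  then obtain g where g: "Ec k = Theta_rel E `` {g}" "g \<in> E" by (rule quotientE)
  have e: "Ec k = {h \<in> E. c g = c h}"
  proof (rule set_eqI)
    fix h
    have "h \<in> Ec k \<longleftrightarrow> (g, h) \<in> Theta_rel E" using g(1) by simp
    also have "\<dots> \<longleftrightarrow> h \<in> E \<and> Theta E g h" using g(2) unfolding Theta_rel_def by simp
    also have "\<dots> \<longleftrightarrow> h \<in> E \<and> c g = c h" using Theta_iff[OF g(2), of h] by blast
    finally show "h \<in> Ec k \<longleftrightarrow> h \<in> {h \<in> E. c g = c h}" by simp
  qed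
  then have gi: "g \<in> Ec k" using g(2) by simp
  then have "(SOME g. g \<in> Ec k) \<in> Ec k" by (rule someI)
  then have ig: "idx k = c g" unfolding idx_def using e by simp
  show "Ec k = {h \<in> E. c h = idx k}" unfolding e ig by (intro Collect_cong) auto
  show "Ec k \<noteq> {}" using gi by auto
qed

lemma cover: assumes "g \<in> E" shows "\<exists>k\<in>{1..d}. g \<in> Ec k"
proof -
  have "Theta_rel E `` {g} \<in> Theta_classes E" unfolding Theta_classes_def
    using assms by (rule quotientI)
  then have "Theta_rel E `` {g} \<in> Ec ` {1..d}" using bij_betw_imp_surj_on[OF classes] by simp
  then obtain k where k: "k \<in> {1..d}" "Ec k = Theta_rel E `` {g}" by auto
  have "Theta E g g" using Theta_iff[OF assms assms] by simp
  then have "(g, g) \<in> Theta_rel E" using assms unfolding Theta_rel_def by simp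
  then have "g \<in> Ec k" using k by simp
  then show ?thesis using k by blast
qed

lemma idx_inj: "inj_on idx {1..d}"
proof (rule inj_onI)
  fix k l assume "k \<in> {1..d}" "l \<in> {1..d}" "idx k = idx l"
  then have "Ec k = Ec l" using Ec_eq by auto
  then show "k = l" using classes \<open>k \<in> {1..d}\<close> \<open>l \<in> {1..d}\<close>
    unfolding bij_betw_def inj_on_def by blast
qed

lemma idx_lt: assumes "k \<in> {1..d}" shows "idx k < n"
proof -
  obtain g where g: "g \<in> Ec k" using Ec_eq(2)[OF assms] by blast
  then have "g \<in> E" "c g = idx k" using Ec_eq(1)[OF assms] by auto
  then obtain x y where "x \<in> g" "y \<in> g" "x \<noteq> y" using edge_form by blast
  then show ?thesis using c_props(1)[of g x y] \<open>g \<in> E\<close> \<open>c g = idx k\<close> by simp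
qed

lemma comp_const: assumes "k \<in> {1..d}" "(adj (E - Ec k))\<^sup>*\<^sup>* x y" shows "F x (idx k) = F y (idx k)"
  using assms(2)
proof (induction rule: rtranclp_induct)
  case base then show ?case by simp
next
  case (step y z)
  from step(2) have "{y, z} \<in> E - Ec k \<and> y \<noteq> z" by (simp add: adj_def)
  then have yz: "{y, z} \<in> E" "{y,z} \<notin> Ec k" "y \<noteq> z" by simp_all
  have "c {y,z} \<noteq> idx k" using Ec_eq(1)[OF assms(1)] yz(1,2) by blast
  then have "F y (idx k) = F z (idx k)" using same_off_c[OF yz(1), of y z "idx k"] idx_lt[OF assms(1)] by auto
  then show ?case using step(3) by simp
qed

lemma side: assumes k: "k \<in> {1..d}"
  shows "\<exists>\<beta>. U k = {y \<in> V. F y (idx k) = \<beta>} \<and> U' k = {y \<in> V. F y (idx k) = (\<not> \<beta>)}"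
proof -
  let ?i = "idx k"
  have cp: "components V (E - Ec k) = {U k, U' k}" using comps k by blast
  obtain x0 where x0: "x0 \<in> V" "U k = {y \<in> V. (adj (E - Ec k))\<^sup>*\<^sup>* x0 y}"
  proof -
    have "U k \<in> components V (E - Ec k)" using cp by blast
    then obtain x where "x \<in> V" "U k = {y \<in> V. (adj (E - Ec k))\<^sup>*\<^sup>* x y}"
      unfolding components_def by blast
    then show ?thesis by (rule that)
  qed
  obtain x1 where x1: "x1 \<in> V" "U' k = {y \<in> V. (adj (E - Ec k))\<^sup>*\<^sup>* x1 y}"
  proof -
    have "U' k \<in> components V (E - Ec k)" using cp by blast
    then obtain x where "x \<in> V" "U' k = {y \<in> V. (adj (E - Ec k))\<^sup>*\<^sup>* x y}"
      unfolding components_def by blast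
    then show ?thesis by (rule that)
  qed
  have cov: "y \<in> U k \<or> y \<in> U' k" if "y \<in> V" for y
  proof -
    have "{z \<in> V. (adj (E - Ec k))\<^sup>*\<^sup>* y z} \<in> components V (E - Ec k)"
      using that unfolding components_def by blast
    then have "{z \<in> V. (adj (E - Ec k))\<^sup>*\<^sup>* y z} \<in> {U k, U' k}" using cp by simp
    moreover have "y \<in> {z \<in> V. (adj (E - Ec k))\<^sup>*\<^sup>* y z}" using that by simp
    ultimately show ?thesis by blast
  qed
  have sU: "F y ?i = F x0 ?i" if "y \<in> U k" for y
  proof -
    have "(adj (E - Ec k))\<^sup>*\<^sup>* x0 y" using that unfolding x0(2) by blast
    then show ?thesis using comp_const[OF k] by metis
  qed
  have sU': "F y ?i = F x1 ?i" if "y \<in> U' k" for y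
  proof -
    have "(adj (E - Ec k))\<^sup>*\<^sup>* x1 y" using that unfolding x1(2) by blast
    then show ?thesis using comp_const[OF k] by metis
  qed
  obtain g where g: "g \<in> Ec k" using Ec_eq(2)[OF k] by blast
  then have gE: "g \<in> E" "c g = ?i" unfolding Ec_eq(1)[OF k] by simp_all
  then obtain a b where ab: "a \<in> V" "b \<in> V" "a \<noteq> b" "g = {a, b}" using edge_form by blast
  have "F a ?i \<noteq> F b ?i" using c_props(2)[of g a b] gE ab by auto
  have ne: "F x1 ?i \<noteq> F x0 ?i"
  proof
    assume e: "F x1 ?i = F x0 ?i"
    have "F a ?i = F x0 ?i" using cov[OF ab(1)] sU sU' e by blast
    moreover have "F b ?i = F x0 ?i" using cov[OF ab(2)] sU sU' e by blast
    ultimately show False using \<open>F a ?i \<noteq> F b ?i\<close> by simp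
  qed
  have UV: "U k \<subseteq> V" "U' k \<subseteq> V" unfolding x0(2) x1(2) by blast+
  have 1: "U k = {y \<in> V. F y ?i = F x0 ?i}"
  proof (rule set_eqI, rule iffI)
    fix y assume "y \<in> U k" then show "y \<in> {y \<in> V. F y ?i = F x0 ?i}" using UV sU by blast
  next
    fix y assume y: "y \<in> {y \<in> V. F y ?i = F x0 ?i}"
    then have "y \<notin> U' k" using sU' ne by auto
    then show "y \<in> U k" using cov y by blast
  qed
  have 2: "U' k = {y \<in> V. F y ?i = (\<not> F x0 ?i)}"
  proof (rule set_eqI, rule iffI)
    fix y assume "y \<in> U' k" then show "y \<in> {y \<in> V. F y ?i = (\<not> F x0 ?i)}" using UV sU' ne by auto
  next
    fix y assume y: "y \<in> {y \<in> V. F y ?i = (\<not> F x0 ?i)}"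
    then have "y \<notin> U k" using sU by auto
    then show "y \<in> U' k" using cov y by blast
  qed
  show ?thesis using 1 2 by blast
qed


definition sep where "sep k e f \<longleftrightarrow>
  (e \<in> induced_edges E (U k) \<and> f \<in> induced_edges E (U' k)) \<or>
  (e \<in> induced_edges E (U' k) \<and> f \<in> induced_edges E (U k))"

lemma sep_D: assumes k: "k \<in> {1..d}" and "sep k e f" "p \<in> e" "q \<in> f" shows "idx k \<in> D p q"
proof -
  obtain \<beta> where b: "U k = {y \<in> V. F y (idx k) = \<beta>}" "U' k = {y \<in> V. F y (idx k) = (\<not> \<beta>)}"
    using side[OF k] by blast
  have "(p \<in> U k \<and> q \<in> U' k) \<or> (p \<in> U' k \<and> q \<in> U k)"
    using assms(2-4) unfolding sep_def induced_edges_def by blast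
  then have "F p (idx k) \<noteq> F q (idx k)" unfolding b by auto
  then show ?thesis using idx_lt[OF k] unfolding D_def by simp
qed

lemma exists_edge: assumes "p \<in> V" "q \<in> V" "i \<in> D p q" shows "\<exists>g\<in>E. c g = i"
proof (rule ccontr)
  assume na: "\<not> (\<exists>g\<in>E. c g = i)"
  have i: "i < n" using assms(3) unfolding D_def by simp
  have "(adj E)\<^sup>*\<^sup>* p q" using conn assms(1,2) unfolding connected_graph_def by blast
  then have "F p i = F q i"
  proof (induction rule: rtranclp_induct)
    case base then show ?case by simp
  next
    case (step y z)
    from step(2) have yz: "{y, z} \<in> E" "y \<noteq> z" unfolding adj_def by simp_all
    have "c {y,z} \<noteq> i" using na yz(1) by blast
    then have "F y i = F z i" using same_off_c[OF yz(1), of y z i] i by auto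
    then show ?case using step(3) by simp
  qed
  then show False using assms(3) unfolding D_def by simp
qed

lemma D_sep: assumes e: "e \<in> E" and f: "f \<in> E" and p: "p \<in> e" and q: "q \<in> f"
  and avoid: "\<forall>i\<in>D p q. i \<noteq> c e \<and> i \<noteq> c f" and i: "i \<in> D p q"
  shows "\<exists>k\<in>{1..d}. idx k = i \<and> sep k e f"
proof -
  have pV: "p \<in> V" "q \<in> V" using EsubV e f p q by auto
  obtain g where g: "g \<in> E" "c g = i" using exists_edge[OF pV i] by blast
  obtain k where k: "k \<in> {1..d}" "g \<in> Ec k" using cover[OF g(1)] by blast
  have ik: "idx k = i" using k g unfolding Ec_eq(1)[OF k(1)] by simp
  obtain \<beta> where b: "U k = {y \<in> V. F y (idx k) = \<beta>}" "U' k = {y \<in> V. F y (idx k) = (\<not> \<beta>)}"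
    using side[OF k(1)] by blast
  have il: "i < n" "F p i \<noteq> F q i" using i unfolding D_def by auto
  have ce: "i \<noteq> c e" "i \<noteq> c f" using avoid i by auto
  have se: "\<forall>y\<in>e. F y i = F p i" using same_off_c[OF e _ p ce(1) il(1)] by metis
  have sf: "\<forall>y\<in>f. F y i = F q i" using same_off_c[OF f _ q ce(2) il(1)] by metis
  have eV: "e \<subseteq> V" "f \<subseteq> V" using EsubV e f by auto
  have "sep k e f"
  proof (cases "F p i = \<beta>")
    case True
    then have "e \<subseteq> U k" "f \<subseteq> U' k" unfolding b ik using se sf eV il(2) by auto
    then show ?thesis unfolding sep_def induced_edges_def using e f by blast
  next
    case False
    then have "e \<subseteq> U' k" "f \<subseteq> U k" unfolding b ik using se sf eV il(2) by auto
    then show ?thesis unfolding sep_def induced_edges_def using e f by blast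
  qed
  then show ?thesis using k ik by blast
qed

lemma choose_pq: assumes e: "e \<in> E" and f: "f \<in> E"
  shows "\<exists>p\<in>e. \<exists>q\<in>f. \<forall>i\<in>D p q. i \<noteq> c e \<and> i \<noteq> c f"
proof -
  obtain x y where xy: "x \<noteq> y" "e = {x, y}" using edge_form e by blast
  obtain u v where uv: "u \<noteq> v" "f = {u, v}" using edge_form f by blast
  have ex: "F x (c e) \<noteq> F y (c e)" "c e < n" using c_props[OF e, of x y] xy by auto
  have fu: "F u (c f) \<noteq> F v (c f)" "c f < n" using c_props[OF f, of u v] uv by auto
  obtain q where q: "q \<in> f" "F q (c f) = F x (c f)"
    using fu(1) uv(2) by (cases "F u (c f) = F x (c f)") auto
  obtain p where p: "p \<in> e" "F p (c e) = F q (c e)"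
    using ex(1) xy(2) by (cases "F x (c e) = F q (c e)") auto
  have "\<forall>i\<in>D p q. i \<noteq> c e \<and> i \<noteq> c f"
  proof
    fix i assume i: "i \<in> D p q"
    then have "F p i \<noteq> F q i" unfolding D_def by simp
    moreover have "F p (c f) = F q (c f)"
    proof (cases "c f = c e")
      case True then show ?thesis using p by simp
    next
      case False
      have "F p (c f) = F x (c f)" using same_off_c[OF e p(1), of x "c f"] xy False fu(2) by auto
      then show ?thesis using q by simp
    qed
    ultimately show "i \<noteq> c e \<and> i \<noteq> c f" using p(2) by auto
  qed
  then show ?thesis using p q by blast
qed

definition S where "S e f = {k \<in> {1..d}. sep k e f}"

lemma lower: assumes "p \<in> e" "q \<in> f" shows "card (S e f) \<le> card (D p q)"
proof -
  have "idx ` S e f \<subseteq> D p q" using sep_D assms unfolding S_def by blast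
  moreover have "inj_on idx (S e f)" using idx_inj unfolding S_def by (rule inj_on_subset) blast
  ultimately show ?thesis using card_inj_on_le finD by blast
qed

lemma upper: assumes "e \<in> E" "f \<in> E" shows "\<exists>p\<in>e. \<exists>q\<in>f. card (D p q) \<le> card (S e f)"
proof -
  obtain p q where pq: "p \<in> e" "q \<in> f" "\<forall>i\<in>D p q. i \<noteq> c e \<and> i \<noteq> c f"
    using choose_pq[OF assms] by blast
  have "D p q \<subseteq> idx ` S e f" using D_sep[OF assms pq] unfolding S_def by blast
  then have "card (D p q) \<le> card (idx ` S e f)" by (rule card_mono[rotated]) (simp add: S_def)
  also have "\<dots> \<le> card (S e f)" by (rule card_image_le) (simp add: S_def)
  finally show ?thesis using pq by blast
qed


lemma card_D_edge: assumes "g \<in> E" "q \<in> g" "r \<in> g" shows "card (D q r) \<le> 1"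
proof (cases "q = r")
  case True then show ?thesis unfolding D_def by simp
next
  case False then show ?thesis using D_edge[OF assms False] by simp
qed

lemma D_tri: "card (D p r) \<le> card (D p q) + card (D q r)"
proof -
  have "D p r \<subseteq> D p q \<union> D q r" unfolding D_def by auto
  then have "card (D p r) \<le> card (D p q \<union> D q r)" by (rule card_mono[rotated]) (simp add: finD)
  also have "\<dots> \<le> card (D p q) + card (D q r)" by (rule card_Un_le)
  finally show ?thesis .
qed

lemma walk_lower: "(ladj E ^^ Suc m) e f \<Longrightarrow> \<exists>p\<in>e. \<exists>q\<in>f. card (D p q) \<le> m"
proof (induction m arbitrary: f)
  case 0
  then have "ladj E e f" by (simp only: relpowp_Suc_0)
  then have "e \<inter> f \<noteq> {}" by (simp add: ladj_def)
  then obtain p where "p \<in> e" "p \<in> f" by blast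
  then show ?case unfolding D_def by auto
next
  case (Suc m)
  from Suc.prems obtain g where g: "(ladj E ^^ Suc m) e g" "ladj E g f"
    by (metis relpowp_Suc_E)
  obtain p q where pq: "p \<in> e" "q \<in> g" "card (D p q) \<le> m" using Suc.IH[OF g(1)] by blast
  from g(2) have gf: "g \<in> E" "g \<inter> f \<noteq> {}" unfolding ladj_def by simp_all
  then obtain r where r: "r \<in> g" "r \<in> f" by blast
  have "card (D q r) \<le> 1" using card_D_edge[OF gf(1) pq(2) r(1)] .
  then have "card (D p r) \<le> Suc m" using D_tri[of p r q] pq(3) by linarith
  then show ?case using pq(1) r(2) by blast
qed

definition L' where "L' a b \<longleftrightarrow> a \<in> E \<and> b \<in> E \<and> a \<inter> b \<noteq> {}"

lemma vwalk: "(adj E ^^ m) p q \<Longrightarrow> e \<in> E \<Longrightarrow> p \<in> e \<Longrightarrow> f \<in> E \<Longrightarrow> q \<in> f \<Longrightarrow> (L' ^^ Suc m) e f"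
proof (induction m arbitrary: q f)
  case 0
  then have "L' e f" unfolding L'_def by auto
  then show ?case by (simp only: relpowp_Suc_0)
next
  case (Suc m)
  from Suc.prems(1) obtain w where w: "(adj E ^^ m) p w" "adj E w q"
    by (metis relpowp_Suc_E)
  have gE: "{w, q} \<in> E" using w(2) unfolding adj_def by simp
  have "(L' ^^ Suc m) e {w, q}" using Suc.IH[OF w(1) Suc.prems(2,3) gE] by simp
  moreover have "L' {w, q} f" using gE Suc.prems(4,5) unfolding L'_def by auto
  ultimately show ?case by (meson relpowp_Suc_I)
qed

lemma refl_reduce: "(L' ^^ m) e f \<Longrightarrow> \<exists>j\<le>m. (ladj E ^^ j) e f"
proof (induction m arbitrary: f)
  case 0 then show ?case by auto
next
  case (Suc m)
  from Suc.prems obtain g where g: "(L' ^^ m) e g" "L' g f" by (metis relpowp_Suc_E)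
  obtain j where j: "j \<le> m" "(ladj E ^^ j) e g" using Suc.IH[OF g(1)] by blast
  show ?case
  proof (cases "g = f")
    case True then show ?thesis using j by (metis le_SucI)
  next
    case False
    then have "ladj E g f" using g(2) unfolding L'_def ladj_def by simp
    then have "(ladj E ^^ Suc j) e f" using j(2) by (meson relpowp_Suc_I)
    then show ?thesis using j(1) by (metis Suc_le_mono)
  qed
qed

lemma vdist_walk: assumes "p \<in> V" "q \<in> V" shows "(adj E ^^ vdist E p q) p q"
proof -
  have "(adj E)\<^sup>*\<^sup>* p q" using conn assms unfolding connected_graph_def by blast
  then have "\<exists>m. (adj E ^^ m) p q" by (simp add: rtranclp_power)
  then show ?thesis unfolding vdist_def gdist_def by (rule LeastI_ex)
qed

lemma edist_formula: assumes e: "e \<in> E" and f: "f \<in> E" and ne: "e \<noteq> f"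
  shows "edist E e f = Suc (card (S e f))"
proof -
  obtain p q where pq: "p \<in> e" "q \<in> f" "card (D p q) \<le> card (S e f)" using upper[OF e f] by blast
  have V: "p \<in> V" "q \<in> V" using EsubV e f pq by auto
  have "(adj E ^^ card (D p q)) p q" using vdist_walk[OF V] vdist_D[OF V] by simp
  then have "(L' ^^ Suc (card (D p q))) e f" using vwalk e pq(1) f pq(2) by blast
  then obtain j where j: "j \<le> Suc (card (D p q))" "(ladj E ^^ j) e f" using refl_reduce by blast
  have lb: "Suc (card (S e f)) \<le> m" if "(ladj E ^^ m) e f" for m
  proof (cases m)
    case 0 then show ?thesis using that ne by simp
  next
    case (Suc m')
    then have "(ladj E ^^ Suc m') e f" using that by simp
    then obtain p' q' where "p' \<in> e" "q' \<in> f" "card (D p' q') \<le> m'" using walk_lower by blast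
    then show ?thesis using lower[of p' e q' f] Suc by simp
  qed
  have jj: "j = Suc (card (S e f))" using lb[OF j(2)] j(1) pq(3) by simp
  show ?thesis unfolding edist_def gdist_def
  proof (rule Least_equality)
    show "(ladj E ^^ Suc (card (S e f))) e f" using j(2) jj by simp
  next
    fix m assume "(ladj E ^^ m) e f" then show "Suc (card (S e f)) \<le> m" by (rule lb)
  qed
qed


lemma IE_disj: assumes k: "k \<in> {1..d}"
  shows "induced_edges E (U k) \<inter> induced_edges E (U' k) = {}"
proof -
  obtain \<beta> where b: "U k = {y \<in> V. F y (idx k) = \<beta>}" "U' k = {y \<in> V. F y (idx k) = (\<not> \<beta>)}"
    using side[OF k] by blast
  have d: "U k \<inter> U' k = {}" unfolding b by auto
  show ?thesis
  proof (rule ccontr)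
    assume "induced_edges E (U k) \<inter> induced_edges E (U' k) \<noteq> {}"
    then obtain h where h: "h \<in> E" "h \<subseteq> U k" "h \<subseteq> U' k" unfolding induced_edges_def by blast
    obtain x y where "h = {x, y}" using edge_form h(1) by blast
    then show False using h d by blast
  qed
qed

lemma finIE: "finite (induced_edges E X)" unfolding induced_edges_def using finE by simp

lemma pair_count: assumes k: "k \<in> {1..d}" and l: "l \<in> {1..d}"
  shows "card {(e, f). e \<in> E \<and> f \<in> E \<and> e \<noteq> f \<and> sep k e f \<and> sep l e f} =
    2 * (card (induced_edges E (U k) \<inter> induced_edges E (U l))
                * card (induced_edges E (U' k) \<inter> induced_edges E (U' l))
              + card (induced_edges E (U k) \<inter> induced_edges E (U' l))
                * card (induced_edges E (U' k) \<inter> induced_edges E (U l)))"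
proof -
  define Ik where "Ik = induced_edges E (U k)"
  define Jk where "Jk = induced_edges E (U' k)"
  define Il where "Il = induced_edges E (U l)"
  define Jl where "Jl = induced_edges E (U' l)"
  have dk: "Ik \<inter> Jk = {}" unfolding Ik_def Jk_def by (rule IE_disj[OF k])
  have dl: "Il \<inter> Jl = {}" unfolding Il_def Jl_def by (rule IE_disj[OF l])
  have sub: "Ik \<subseteq> E" "Jk \<subseteq> E" "Il \<subseteq> E" "Jl \<subseteq> E"
    unfolding Ik_def Jk_def Il_def Jl_def induced_edges_def by auto
  have fin: "finite Ik" "finite Jk" "finite Il" "finite Jl"
    unfolding Ik_def Jk_def Il_def Jl_def by (simp_all add: finIE)
  let ?A = "(Ik \<inter> Il) \<times> (Jk \<inter> Jl)" and ?B = "(Jk \<inter> Jl) \<times> (Ik \<inter> Il)"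
  let ?C = "(Ik \<inter> Jl) \<times> (Jk \<inter> Il)" and ?D = "(Jk \<inter> Il) \<times> (Ik \<inter> Jl)"
  have seteq: "{(e, f). e \<in> E \<and> f \<in> E \<and> e \<noteq> f \<and> sep k e f \<and> sep l e f} = (?A \<union> ?B) \<union> (?C \<union> ?D)"
  proof (rule set_eqI)
    fix x :: "'a set \<times> 'a set"
    obtain e f where x: "x = (e, f)" by (cases x)
    have "sep k e f \<longleftrightarrow> (e \<in> Ik \<and> f \<in> Jk) \<or> (e \<in> Jk \<and> f \<in> Ik)"
      unfolding sep_def Ik_def Jk_def by simp
    moreover have "sep l e f \<longleftrightarrow> (e \<in> Il \<and> f \<in> Jl) \<or> (e \<in> Jl \<and> f \<in> Il)"
      unfolding sep_def Il_def Jl_def by simp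
    ultimately show "x \<in> {(e, f). e \<in> E \<and> f \<in> E \<and> e \<noteq> f \<and> sep k e f \<and> sep l e f} \<longleftrightarrow> x \<in> (?A \<union> ?B) \<union> (?C \<union> ?D)"
      unfolding x using dk dl sub by blast
  qed
  have f2: "finite ?A" "finite ?B" "finite ?C" "finite ?D" using fin by auto
  have "card ((?A \<union> ?B) \<union> (?C \<union> ?D)) = card (?A \<union> ?B) + card (?C \<union> ?D)"
    by (rule card_Un_disjoint) (use f2 dk dl in blast)+
  also have "card (?A \<union> ?B) = card ?A + card ?B"
    by (rule card_Un_disjoint) (use f2 dk dl in blast)+
  also have "card (?C \<union> ?D) = card ?C + card ?D"
    by (rule card_Un_disjoint) (use f2 dk dl in blast)+
  finally have "card ((?A \<union> ?B) \<union> (?C \<union> ?D)) = card ?A + card ?B + (card ?C + card ?D)" .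
  then show ?thesis unfolding seteq Ik_def Jk_def Il_def Jl_def by (simp add: card_cartesian_product)
qed


lemma main: "edge_hyper_wiener E =
     2 * edge_wiener E
     + (\<Sum>k = 1..d - 1. \<Sum>l = k + 1..d.
          real (card (induced_edges E (U k) \<inter> induced_edges E (U l))
                * card (induced_edges E (U' k) \<inter> induced_edges E (U' l))
              + card (induced_edges E (U k) \<inter> induced_edges E (U' l))
                * card (induced_edges E (U' k) \<inter> induced_edges E (U l))))
     - real (card E choose 2)"
proof -
  define EP where "EP = {(e, f). e \<in> E \<and> f \<in> E \<and> e \<noteq> f}"
  define K where "K = {1..d}"
  define \<sigma> where "\<sigma> k x = (if sep k (fst x) (snd x) then 1 else (0::real))" for k x
  define P where "P k l = real (card (induced_edges E (U k) \<inter> induced_edges E (U l))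
                * card (induced_edges E (U' k) \<inter> induced_edges E (U' l))
              + card (induced_edges E (U k) \<inter> induced_edges E (U' l))
                * card (induced_edges E (U' k) \<inter> induced_edges E (U l)))" for k l
  define G where "G k l = (\<Sum>x\<in>EP. \<sigma> k x * \<sigma> l x)" for k l
  define S1 where "S1 = (\<Sum>x\<in>EP. \<Sum>k\<in>K. \<sigma> k x)"
  define S2 where "S2 = (\<Sum>x\<in>EP. (\<Sum>k\<in>K. \<sigma> k x)^2)"
  define N where "N = real (card EP)"
  have finEP: "finite EP"
  proof -
    have "EP \<subseteq> E \<times> E" unfolding EP_def by auto
    then show ?thesis using finE finite_subset by blast
  qed
  have finK: "finite K" unfolding K_def by simp
  have ed: "real (edist E e f) = 1 + (\<Sum>k\<in>K. \<sigma> k (e, f))" if "(e, f) \<in> EP" for e f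
  proof -
    have "edist E e f = Suc (card (S e f))" using that edist_formula unfolding EP_def by simp
    moreover have "real (card (S e f)) = (\<Sum>k\<in>K. \<sigma> k (e, f))"
      unfolding S_def K_def \<sigma>_def fst_conv snd_conv by (rule card_filter_sum) simp
    ultimately show ?thesis by simp
  qed
  have sum1: "(\<Sum>(e, f)\<in>EP. real (edist E e f)) = N + S1"
  proof -
    have "(\<Sum>(e, f)\<in>EP. real (edist E e f)) = (\<Sum>x\<in>EP. 1 + (\<Sum>k\<in>K. \<sigma> k x))"
      by (rule sum.cong) (auto simp: ed)
    then show ?thesis unfolding N_def S1_def by (simp add: sum.distrib)
  qed
  have sum2: "(\<Sum>(e, f)\<in>EP. real (edist E e f) ^ 2) = N + 2 * S1 + S2"
  proof -
    have "(\<Sum>(e, f)\<in>EP. real (edist E e f) ^ 2) = (\<Sum>x\<in>EP. 1 + 2 * (\<Sum>k\<in>K. \<sigma> k x) + (\<Sum>k\<in>K. \<sigma> k x)^2)"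
      by (rule sum.cong) (auto simp: ed power2_eq_square algebra_simps)
    then show ?thesis unfolding N_def S1_def S2_def by (simp add: sum.distrib sum_distrib_left)
  qed
  have sq: "\<sigma> k x * \<sigma> k x = \<sigma> k x" for k x unfolding \<sigma>_def by simp
  have S2eq: "S2 = S1 + (\<Sum>k\<in>K. \<Sum>l\<in>K-{k}. G k l)"
  proof -
    have "S2 = (\<Sum>x\<in>EP. \<Sum>k\<in>K. \<Sum>l\<in>K. \<sigma> k x * \<sigma> l x)"
      unfolding S2_def power2_eq_square by (simp add: sum_product)
    also have "\<dots> = (\<Sum>k\<in>K. \<Sum>x\<in>EP. \<Sum>l\<in>K. \<sigma> k x * \<sigma> l x)" by (rule sum.swap)
    also have "\<dots> = (\<Sum>k\<in>K. \<Sum>l\<in>K. G k l)" unfolding G_def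
      by (rule sum.cong[OF refl]) (rule sum.swap)
    also have "\<dots> = (\<Sum>k\<in>K. G k k + (\<Sum>l\<in>K-{k}. G k l))"
      by (rule sum.cong[OF refl]) (simp add: sum.remove[OF finK])
    also have "\<dots> = (\<Sum>k\<in>K. G k k) + (\<Sum>k\<in>K. \<Sum>l\<in>K-{k}. G k l)" by (simp add: sum.distrib)
    also have "(\<Sum>k\<in>K. G k k) = S1" unfolding G_def sq S1_def by (rule sum.swap)
    finally show ?thesis .
  qed
  have Gsym: "G k l = G l k" for k l unfolding G_def by (simp add: mult.commute)
  have GP: "G k l = 2 * P k l" if "k \<in> K" "l \<in> K" for k l
  proof -
    have "G k l = (\<Sum>x\<in>EP. if sep k (fst x) (snd x) \<and> sep l (fst x) (snd x) then 1 else 0)"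
      unfolding G_def \<sigma>_def by (rule sum.cong) auto
    also have "\<dots> = real (card {x\<in>EP. sep k (fst x) (snd x) \<and> sep l (fst x) (snd x)})"
      using card_filter_sum[OF finEP] by simp
    also have "{x\<in>EP. sep k (fst x) (snd x) \<and> sep l (fst x) (snd x)}
       = {(e, f). e \<in> E \<and> f \<in> E \<and> e \<noteq> f \<and> sep k e f \<and> sep l e f}" unfolding EP_def by auto
    also have "real (card \<dots>) = 2 * P k l"
      using pair_count[of k l] that unfolding P_def K_def by simp
    finally show ?thesis .
  qed
  have off: "(\<Sum>k\<in>K. \<Sum>l\<in>K-{k}. G k l) = 4 * (\<Sum>k = 1..d - 1. \<Sum>l = k + 1..d. P k l)"
  proof -
    have "(\<Sum>k\<in>K. \<Sum>l\<in>K-{k}. G k l) = 2 * (\<Sum>k = 1..d - 1. \<Sum>l = k + 1..d. G k l)"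
      unfolding K_def by (rule sym_split[OF Gsym])
    also have "(\<Sum>k = 1..d - 1. \<Sum>l = k + 1..d. G k l) = (\<Sum>k = 1..d - 1. \<Sum>l = k + 1..d. 2 * P k l)"
    proof (rule sum.cong[OF refl])
      fix k assume k: "k \<in> {1..d - 1}"
      show "(\<Sum>l = k + 1..d. G k l) = (\<Sum>l = k + 1..d. 2 * P k l)"
      proof (rule sum.cong[OF refl])
        fix l assume l: "l \<in> {k + 1..d}"
        have "k \<in> K" "l \<in> K" using k l unfolding K_def by auto
        then show "G k l = 2 * P k l" by (rule GP)
      qed
    qed
    finally show ?thesis by (simp add: sum_distrib_left)
  qed
  have NC: "N = 2 * real (card E choose 2)"
  proof -
    have "card EP = 2 * (card E choose 2)" unfolding EP_def using c2[OF finE] c2n by simp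
    then show ?thesis unfolding N_def by simp
  qed
  have WW: "edge_hyper_wiener E = (1/2) * ((N + S1) / 2) + (1/2) * ((N + 2 * S1 + S2) / 2)"
    unfolding edge_hyper_wiener_def using sum1 sum2 unfolding EP_def by simp
  have W: "edge_wiener E = (N + S1) / 2"
    unfolding edge_wiener_def using sum1 unfolding EP_def by simp
  have "(\<Sum>k = 1..d - 1. \<Sum>l = k + 1..d.
          real (card (induced_edges E (U k) \<inter> induced_edges E (U l))
                * card (induced_edges E (U' k) \<inter> induced_edges E (U' l))
              + card (induced_edges E (U k) \<inter> induced_edges E (U' l))
                * card (induced_edges E (U' k) \<inter> induced_edges E (U l)))) = (\<Sum>k = 1..d - 1. \<Sum>l = k + 1..d. P k l)"
    unfolding P_def ..
  then show ?thesis unfolding WW W S2eq off NC by (simp add: field_simps)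
qed

end

theorem theorem3p4:
  fixes V :: "'a set" and E :: "'a set set" and d :: nat
    and Ec :: "nat \<Rightarrow> 'a set set" and U U' :: "nat \<Rightarrow> 'a set"
  assumes pc: "partial_cube V E"
    and conn: "connected_graph V E"
    and classes: "bij_betw Ec {1..d} (Theta_classes E)"
    and comps: "\<And>k. k \<in> {1..d} \<Longrightarrow> U k \<noteq> U' k \<and> components V (E - Ec k) = {U k, U' k}"
  shows "edge_hyper_wiener E =
     2 * edge_wiener E
     + (\<Sum>k = 1..d - 1. \<Sum>l = k + 1..d.
          real (card (induced_edges E (U k) \<inter> induced_edges E (U l))
                * card (induced_edges E (U' k) \<inter> induced_edges E (U' l))
              + card (induced_edges E (U k) \<inter> induced_edges E (U' l))
                * card (induced_edges E (U' k) \<inter> induced_edges E (U l))))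
     - real (card E choose 2)"
proof -
  obtain n :: nat and F :: "'a \<Rightarrow> nat \<Rightarrow> bool" where sg: "simple_graph V E"
    and emb: "\<forall>x\<in>V. \<forall>y\<in>V. vdist E x y = card {i. i < n \<and> F x i \<noteq> F y i}"
    using pc unfolding partial_cube_def by blast
  interpret PC V E n F d Ec U U'
    using sg emb conn classes comps by unfold_locales blast+
  show ?thesis by (rule main)
qed

end
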